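(* For every $J$-unitary $T$ on ${\cal K}$, $$g(V(T))=g(T),\qquad g_{\mathrm{ess}}(V(T))=g_{\mathrm{ess}}(T),$$ and $$g(T)=g(T^* )=g(T^{-1}),\qquad g_{\mathrm{ess}}(T)=g_{\mathrm{ess}}(T^* )=g_{\mathrm{ess}}(T^{-1}).$$
   Context: ${\cal H}$ is a separable complex Hilbert space, ${\cal K}={\cal H}\oplus{\cal H}$, $J=\begin{pmatrix}{\bf 1}&0\\0&-{\bf 1}\end{pmatrix}$. A bounded invertible $T=\begin{pmatrix}a&b\\c&d\end{pmatrix}$ is $J$-unitary if $T^*JT=J$; $V(T)=\begin{pmatrix}(a^* )^{-1}&bd^{-1}\\-d^{-1}c&d^{-1}\end{pmatrix}$ (a unitary). For a bounded operator $A$ on a Hilbert space set $$g(A)=\min\sigma\Bigl(({\bf 1}+A^*A)^{-\frac12}({\bf 1}-A)^*({\bf 1}-A)({\bf 1}+A^*A)^{-\frac12}\Bigr)=\sup\{g\ge0:\ g({\bf 1}+A^*A)<(A-{\bf 1})^*(A-{\bf 1})\},$$ and let $g_{\mathrm{ess}}(A)$ be defined by the same supremum except that the operator inequality is only required to hold on some subspace of finite codimension. *)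

theory Defs
  imports "HOL-Analysis.Analysis"
begin

text \<open>A complex Hilbert space is modelled abstractly: a type 'h carrying an abelian
group structure, together with an explicit complex scalar multiplication sc and an
inner product ip (conjugate-linear in the first, linear in the second argument).\<close>

definition hnorm :: "('h \<Rightarrow> 'h \<Rightarrow> complex) \<Rightarrow> 'h \<Rightarrow> real" where
  "hnorm ip x = sqrt (Re (ip x x))"

definition separable_complex_hilbert ::
  "(complex \<Rightarrow> 'h::ab_group_add \<Rightarrow> 'h) \<Rightarrow> ('h \<Rightarrow> 'h \<Rightarrow> complex) \<Rightarrow> bool" where
  "separable_complex_hilbert sc ip \<longleftrightarrow>
     (\<forall>x. sc 1 x = x) \<and>
     (\<forall>a b x. sc a (sc b x) = sc (a * b) x) \<and>
     (\<forall>a b x. sc (a + b) x = sc a x + sc b x) \<and>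
     (\<forall>a x y. sc a (x + y) = sc a x + sc a y) \<and>
     (\<forall>x y z. ip x (y + z) = ip x y + ip x z) \<and>
     (\<forall>a x y. ip x (sc a y) = a * ip x y) \<and>
     (\<forall>x y. ip x y = cnj (ip y x)) \<and>
     (\<forall>x. Re (ip x x) \<ge> 0) \<and>
     (\<forall>x. ip x x = 0 \<longrightarrow> x = 0) \<and>
     \<comment> \<open>completeness\<close>
     (\<forall>s :: nat \<Rightarrow> 'h. (\<forall>e>0. \<exists>N. \<forall>m\<ge>N. \<forall>n\<ge>N. hnorm ip (s m - s n) < e) \<longrightarrow>
        (\<exists>l. \<forall>e>0. \<exists>N. \<forall>n\<ge>N. hnorm ip (s n - l) < e)) \<and>
     \<comment> \<open>separability\<close>
     (\<exists>D. countable D \<and> (\<forall>x. \<forall>e>0. \<exists>d\<in>D. hnorm ip (x - d) < e))"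

definition bounded_op ::
  "(complex \<Rightarrow> 'h::ab_group_add \<Rightarrow> 'h) \<Rightarrow> ('h \<Rightarrow> 'h \<Rightarrow> complex) \<Rightarrow> ('h \<Rightarrow> 'h) \<Rightarrow> bool" where
  "bounded_op sc ip A \<longleftrightarrow>
     (\<forall>x y. A (x + y) = A x + A y) \<and> (\<forall>a x. A (sc a x) = sc a (A x)) \<and>
     (\<exists>C. \<forall>x. hnorm ip (A x) \<le> C * hnorm ip x)"

text \<open>Hilbert space adjoint (unique for bounded operators).\<close>
definition adj :: "('h \<Rightarrow> 'h \<Rightarrow> complex) \<Rightarrow> ('h \<Rightarrow> 'h) \<Rightarrow> ('h \<Rightarrow> 'h)" where
  "adj ip A = (SOME B. \<forall>x y. ip (A x) y = ip x (B y))"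

definition scK :: "(complex \<Rightarrow> 'h \<Rightarrow> 'h) \<Rightarrow> complex \<Rightarrow> 'h \<times> 'h \<Rightarrow> 'h \<times> 'h" where
  "scK sc a z = (sc a (fst z), sc a (snd z))"

definition ipK :: "('h \<Rightarrow> 'h \<Rightarrow> complex) \<Rightarrow> 'h \<times> 'h \<Rightarrow> 'h \<times> 'h \<Rightarrow> complex" where
  "ipK ip z w = ip (fst z) (fst w) + ip (snd z) (snd w)"

definition Jop :: "'h::ab_group_add \<times> 'h \<Rightarrow> 'h \<times> 'h" where
  "Jop z = (fst z, - snd z)"

text \<open>Block entries of an operator T on K: T = [[a, b], [c, d]].\<close>
definition blk_a :: "('h::ab_group_add \<times> 'h \<Rightarrow> 'h \<times> 'h) \<Rightarrow> 'h \<Rightarrow> 'h" where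
  "blk_a T x = fst (T (x, 0))"
definition blk_b :: "('h::ab_group_add \<times> 'h \<Rightarrow> 'h \<times> 'h) \<Rightarrow> 'h \<Rightarrow> 'h" where
  "blk_b T y = fst (T (0, y))"
definition blk_c :: "('h::ab_group_add \<times> 'h \<Rightarrow> 'h \<times> 'h) \<Rightarrow> 'h \<Rightarrow> 'h" where
  "blk_c T x = snd (T (x, 0))"
definition blk_d :: "('h::ab_group_add \<times> 'h \<Rightarrow> 'h \<times> 'h) \<Rightarrow> 'h \<Rightarrow> 'h" where
  "blk_d T y = snd (T (0, y))"

definition J_unitary :: "(complex \<Rightarrow> 'h::ab_group_add \<Rightarrow> 'h) \<Rightarrow> ('h \<Rightarrow> 'h \<Rightarrow> complex)
    \<Rightarrow> ('h \<times> 'h \<Rightarrow> 'h \<times> 'h) \<Rightarrow> bool" where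
  "J_unitary sc ip T \<longleftrightarrow>
     bounded_op (scK sc) (ipK ip) T \<and> bij T \<and> bounded_op (scK sc) (ipK ip) (inv T) \<and>
     (\<forall>z. adj (ipK ip) T (Jop (T z)) = Jop z)"

text \<open>V(T) = [[(a*)^{-1}, b d^{-1}], [-d^{-1} c, d^{-1}]].\<close>
definition Vop :: "('h \<Rightarrow> 'h \<Rightarrow> complex) \<Rightarrow> ('h::ab_group_add \<times> 'h \<Rightarrow> 'h \<times> 'h) \<Rightarrow> 'h \<times> 'h \<Rightarrow> 'h \<times> 'h" where
  "Vop ip T z =
     (inv (adj ip (blk_a T)) (fst z) + blk_b T (inv (blk_d T) (snd z)),
      - inv (blk_d T) (blk_c T (fst z)) + inv (blk_d T) (snd z))"

text \<open>g(A) = sup {g \<ge> 0. g (1 + A*A) \<le> (A - 1)*(A - 1)}, the operator inequality written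
via quadratic forms: g (|x|^2 + |Ax|^2) \<le> |Ax - x|^2.\<close>
definition gval :: "('k::ab_group_add \<Rightarrow> 'k \<Rightarrow> complex) \<Rightarrow> ('k \<Rightarrow> 'k) \<Rightarrow> real" where
  "gval ip A = Sup {g. g \<ge> 0 \<and>
     (\<forall>x. g * ((hnorm ip x)\<^sup>2 + (hnorm ip (A x))\<^sup>2) \<le> (hnorm ip (A x - x))\<^sup>2)}"

definition fin_codim_subspace ::
  "(complex \<Rightarrow> 'k::ab_group_add \<Rightarrow> 'k) \<Rightarrow> ('k \<Rightarrow> 'k \<Rightarrow> complex) \<Rightarrow> 'k set \<Rightarrow> bool" where
  "fin_codim_subspace sc ip M \<longleftrightarrow>
     0 \<in> M \<and> (\<forall>x\<in>M. \<forall>y\<in>M. x + y \<in> M) \<and> (\<forall>a. \<forall>x\<in>M. sc a x \<in> M) \<and>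
     (\<forall>(s :: nat \<Rightarrow> 'k) l. (\<forall>n. s n \<in> M) \<and> (\<forall>e>0. \<exists>N. \<forall>n\<ge>N. hnorm ip (s n - l) < e) \<longrightarrow> l \<in> M) \<and>
     (\<exists>F. finite F \<and> (\<forall>x. \<exists>m\<in>M. \<exists>c. x = m + (\<Sum>f\<in>F. sc (c f) f)))"

definition gess :: "(complex \<Rightarrow> 'k::ab_group_add \<Rightarrow> 'k) \<Rightarrow> ('k \<Rightarrow> 'k \<Rightarrow> complex)
    \<Rightarrow> ('k \<Rightarrow> 'k) \<Rightarrow> real" where
  "gess sc ip A = Sup {g. g \<ge> 0 \<and> (\<exists>M. fin_codim_subspace sc ip M \<and>
     (\<forall>x\<in>M. g * ((hnorm ip x)\<^sup>2 + (hnorm ip (A x))\<^sup>2) \<le> (hnorm ip (A x - x))\<^sup>2))}"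

end

theory Submission
  imports Defs
begin


definition closed_sub :: "(complex \<Rightarrow> 'h::ab_group_add \<Rightarrow> 'h) \<Rightarrow> ('h \<Rightarrow> 'h \<Rightarrow> complex) \<Rightarrow> 'h set \<Rightarrow> bool" where
  "closed_sub sc ip M \<longleftrightarrow> 0 \<in> M \<and> (\<forall>x\<in>M. \<forall>y\<in>M. x + y \<in> M) \<and> (\<forall>a. \<forall>x\<in>M. sc a x \<in> M) \<and>
     (\<forall>(s::nat \<Rightarrow> 'h) l. (\<forall>n. s n \<in> M) \<and> (\<forall>e>0. \<exists>N. \<forall>n\<ge>N. hnorm ip (s n - l) < e) \<longrightarrow> l \<in> M)"

locale hs =
  fixes sc :: "complex \<Rightarrow> 'h::ab_group_add \<Rightarrow> 'h" and ip :: "'h \<Rightarrow> 'h \<Rightarrow> complex"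
  assumes sc_one: "sc 1 x = x"
    and sc_assoc: "sc a (sc b x) = sc (a * b) x"
    and sc_addl: "sc (a + b) x = sc a x + sc b x"
    and sc_addr: "sc a (x + y) = sc a x + sc a y"
    and ip_addr: "ip x (y + z) = ip x y + ip x z"
    and ip_scr: "ip x (sc a y) = a * ip x y"
    and ip_cnj: "ip x y = cnj (ip y x)"
    and ip_pos: "Re (ip x x) \<ge> 0"
    and ip_def: "ip x x = 0 \<Longrightarrow> x = 0"
    and complete: "(\<forall>e>0. \<exists>N::nat. \<forall>m\<ge>N. \<forall>n\<ge>N. hnorm ip (s m - s n) < e) \<Longrightarrow>
        (\<exists>l. \<forall>e>0. \<exists>N. \<forall>n\<ge>N. hnorm ip (s n - l) < e)"
begin

lemma ip_zero_r[simp]: "ip x 0 = 0"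
  using ip_addr[of x 0 0] by simp
lemma ip_minus_r[simp]: "ip x (- y) = - ip x y"
proof -
  have "ip x y + ip x (-y) = 0" using ip_addr[of x y "-y"] by simp
  then show ?thesis by (metis minus_unique)
qed
lemma ip_diff_r: "ip x (y - z) = ip x y - ip x z"
  using ip_addr[of x y "-z"] by simp
lemma cnj_ip: "cnj (ip y x) = ip x y" by (simp add: ip_cnj[of x y])
lemma ip_addl: "ip (x + y) z = ip x z + ip y z"
  by (subst ip_cnj) (simp add: ip_addr cnj_ip)
lemma ip_zero_l[simp]: "ip 0 x = 0"
  by (subst ip_cnj) simp
lemma ip_minus_l[simp]: "ip (- x) y = - ip x y"
  by (subst ip_cnj) (simp add: cnj_ip)
lemma ip_diff_l: "ip (x - y) z = ip x z - ip y z"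
  by (subst ip_cnj) (simp add: ip_diff_r cnj_ip)
lemma ip_scl: "ip (sc a x) y = cnj a * ip x y"
  by (subst ip_cnj) (simp add: ip_scr cnj_ip)
lemma sc_zero_r[simp]: "sc a 0 = 0"
  using sc_addr[of a 0 0] by simp
lemma sc_minus_r: "sc a (- x) = - sc a x"
proof -
  have "sc a x + sc a (-x) = 0" using sc_addr[of a x "-x"] by simp
  then show ?thesis by (metis minus_unique)
qed
lemma sc_diff_r: "sc a (x - y) = sc a x - sc a y"
  using sc_addr[of a x "-y"] by (simp add: sc_minus_r)
lemma sc_zero_l[simp]: "sc 0 x = 0"
  using sc_addl[of 0 0 x] by simp

lemma ip_self_real: "ip x x = complex_of_real (Re (ip x x))"
proof -
  have "Im (ip x x) = Im (cnj (ip x x))" using ip_cnj[of x x] by simp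
  then have "Im (ip x x) = 0" by simp
  then show ?thesis by (simp add: complex_eq_iff)
qed

lemma hn_sq: "(hnorm ip x)\<^sup>2 = Re (ip x x)"
  by (simp add: hnorm_def ip_pos)
lemma hn_nonneg[simp]: "hnorm ip x \<ge> 0"
  by (simp add: hnorm_def ip_pos)
lemma hn_zero_iff: "hnorm ip x = 0 \<longleftrightarrow> x = 0"
proof
  assume "hnorm ip x = 0"
  then have "Re (ip x x) = 0" using hn_sq[of x] by simp
  then have "ip x x = 0" using ip_self_real[of x] by simp
  then show "x = 0" by (rule ip_def)
qed (simp add: hnorm_def)
lemma hn_zero[simp]: "hnorm ip 0 = 0" by (simp add: hn_zero_iff)

lemma re_ofr: "Re (complex_of_real r * z) = r * Re z" by simp

lemma cnj_mult_self: "cnj z * z = complex_of_real ((cmod z)\<^sup>2)"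
  by (metis complex_norm_square mult.commute)

lemma hn_sc: "hnorm ip (sc a x) = cmod a * hnorm ip x"
proof -
  have "ip (sc a x) (sc a x) = (cnj a * a) * ip x x" by (simp add: ip_scl ip_scr)
  also have "cnj a * a = complex_of_real ((cmod a)\<^sup>2)" by (rule cnj_mult_self)
  finally have "Re (ip (sc a x) (sc a x)) = (cmod a)\<^sup>2 * Re (ip x x)" by (simp only: re_ofr)
  then have "(hnorm ip (sc a x))\<^sup>2 = (cmod a * hnorm ip x)\<^sup>2" by (simp add: hn_sq power_mult_distrib)
  then show ?thesis by (simp add: power2_eq_iff_nonneg)
qed

lemma sc_m1: "sc (-1) x = - x"
  using sc_addl[of 1 "-1" x] by (simp add: sc_one eq_neg_iff_add_eq_0 add.commute)

lemma hn_minus: "hnorm ip (- x) = hnorm ip x"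
  using hn_sc[of "-1" x] by (simp add: sc_m1)
lemma hn_commute: "hnorm ip (x - y) = hnorm ip (y - x)"
  using hn_minus[of "x - y"] by simp

lemma expand: "(hnorm ip (x - sc t y))\<^sup>2 = (hnorm ip x)\<^sup>2 + (cmod t)\<^sup>2 * (hnorm ip y)\<^sup>2 - 2 * Re (t * ip x y)"
proof -
  have "ip (x - sc t y) (x - sc t y) = ip x x - t * ip x y - cnj t * ip y x + (cnj t * t) * ip y y"
    by (simp add: ip_diff_l ip_diff_r ip_scl ip_scr algebra_simps)
  moreover have "cnj t * ip y x = cnj (t * ip x y)" by (simp add: cnj_ip)
  moreover have "cnj t * t = complex_of_real ((cmod t)\<^sup>2)" by (rule cnj_mult_self)
  ultimately have "Re (ip (x - sc t y) (x - sc t y)) = Re (ip x x) - 2 * Re (t * ip x y) + (cmod t)\<^sup>2 * Re (ip y y)"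
    by (simp only: minus_complex.sel plus_complex.sel re_ofr cnj.sel)
  then show ?thesis by (simp add: hn_sq)
qed

lemma expand_plus: "(hnorm ip (x + y))\<^sup>2 = (hnorm ip x)\<^sup>2 + (hnorm ip y)\<^sup>2 + 2 * Re (ip x y)"
proof -
  have "ip (x + y) (x + y) = ip x x + ip x y + ip y x + ip y y"
    by (simp add: ip_addl ip_addr)
  moreover have "Re (ip y x) = Re (ip x y)" by (subst ip_cnj) simp
  ultimately show ?thesis by (simp add: hn_sq)
qed

lemma expand_diff: "(hnorm ip (x - y))\<^sup>2 = (hnorm ip x)\<^sup>2 + (hnorm ip y)\<^sup>2 - 2 * Re (ip x y)"
  using expand_plus[of x "-y"] by (simp add: hn_minus)

lemma key:
  assumes "y \<noteq> 0"
  shows "(hnorm ip (x - sc (cnj (ip x y) / complex_of_real ((hnorm ip y)\<^sup>2)) y))\<^sup>2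
           = (hnorm ip x)\<^sup>2 - (cmod (ip x y))\<^sup>2 / (hnorm ip y)\<^sup>2"
proof -
  have ny: "hnorm ip y > 0" using assms hn_zero_iff hn_nonneg by (metis less_eq_real_def)
  define t where "t = cnj (ip x y) / complex_of_real ((hnorm ip y)\<^sup>2)"
  have ct: "cmod t = cmod (ip x y) / (hnorm ip y)\<^sup>2"
    unfolding t_def norm_divide complex_mod_cnj norm_of_real by simp
  have tr: "t * ip x y = complex_of_real ((cmod (ip x y))\<^sup>2 / (hnorm ip y)\<^sup>2)"
  proof -
    have "t * ip x y = (cnj (ip x y) * ip x y) / complex_of_real ((hnorm ip y)\<^sup>2)" by (simp add: t_def)
    also have "\<dots> = complex_of_real ((cmod (ip x y))\<^sup>2) / complex_of_real ((hnorm ip y)\<^sup>2)"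
      by (simp only: cnj_mult_self)
    finally show ?thesis by (simp only: of_real_divide)
  qed
  have "(hnorm ip (x - sc t y))\<^sup>2 = (hnorm ip x)\<^sup>2 + (cmod (ip x y) / (hnorm ip y)\<^sup>2)\<^sup>2 * (hnorm ip y)\<^sup>2
       - 2 * ((cmod (ip x y))\<^sup>2 / (hnorm ip y)\<^sup>2)"
    by (simp only: expand ct tr Re_complex_of_real)
  also have "(cmod (ip x y) / (hnorm ip y)\<^sup>2)\<^sup>2 * (hnorm ip y)\<^sup>2 = (cmod (ip x y))\<^sup>2 / (hnorm ip y)\<^sup>2"
    using ny by (simp add: power_divide power2_eq_square)
  finally show ?thesis unfolding t_def by simp
qed

lemma CS: "cmod (ip x y) \<le> hnorm ip x * hnorm ip y"
proof (cases "y = 0")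
  case True then show ?thesis by simp
next
  case False
  then have ny: "hnorm ip y > 0" using hn_zero_iff hn_nonneg by (metis less_eq_real_def)
  have "0 \<le> (hnorm ip x)\<^sup>2 - (cmod (ip x y))\<^sup>2 / (hnorm ip y)\<^sup>2"
    using key[OF False, of x] by (metis zero_le_power2)
  then have "(cmod (ip x y))\<^sup>2 / (hnorm ip y)\<^sup>2 \<le> (hnorm ip x)\<^sup>2" by simp
  then have "(cmod (ip x y))\<^sup>2 \<le> (hnorm ip x)\<^sup>2 * (hnorm ip y)\<^sup>2"
    using ny by (simp add: pos_divide_le_eq)
  then have "(cmod (ip x y))\<^sup>2 \<le> (hnorm ip x * hnorm ip y)\<^sup>2"
    by (simp add: power_mult_distrib)
  then show ?thesis by (meson hn_nonneg mult_nonneg_nonneg power2_le_imp_le)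
qed

lemma tri: "hnorm ip (x + y) \<le> hnorm ip x + hnorm ip y"
proof -
  have "Re (ip x y) \<le> hnorm ip x * hnorm ip y" using CS[of x y] complex_Re_le_cmod order_trans by blast
  then have "(hnorm ip (x + y))\<^sup>2 \<le> (hnorm ip x + hnorm ip y)\<^sup>2"
    by (simp add: expand_plus power2_sum)
  then show ?thesis by (rule power2_le_imp_le) simp
qed

lemma tri_diff: "hnorm ip (x - z) \<le> hnorm ip (x - y) + hnorm ip (y - z)"
  using tri[of "x - y" "y - z"] by simp

lemma ip_unique: "(\<And>x. ip x u = ip x v) \<Longrightarrow> u = v"
proof -
  assume h: "\<And>x. ip x u = ip x v"
  have "ip (u - v) (u - v) = 0" using h[of "u - v"] by (simp add: ip_diff_r)
  then have "u - v = 0" by (rule ip_def)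
  then show ?thesis by simp
qed

lemma paral: "(hnorm ip (x + y))\<^sup>2 + (hnorm ip (x - y))\<^sup>2 = 2 * (hnorm ip x)\<^sup>2 + 2 * (hnorm ip y)\<^sup>2"
  by (simp add: expand_plus expand_diff)

lemma sc_two: "sc 2 x = x + x"
  using sc_addl[of 1 1 x] by (simp add: sc_one)

lemma cs_diff: "closed_sub sc ip M \<Longrightarrow> x \<in> M \<Longrightarrow> y \<in> M \<Longrightarrow> x - y \<in> M"
  unfolding closed_sub_def by (metis diff_conv_add_uminus sc_m1)

lemma archi: "e > (0::real) \<Longrightarrow> \<exists>N::nat. \<forall>n\<ge>N. c / (real n + 1) < e"
proof -
  assume e: "e > 0"
  obtain N :: nat where N: "real N > c / e" using reals_Archimedean2 by blast
  have "c / (real n + 1) < e" if "n \<ge> N" for n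
  proof -
    have "real n + 1 > c / e" using N that by linarith
    then have "c < e * (real n + 1)" using e by (simp add: pos_divide_less_eq mult.commute)
    then show ?thesis by (simp add: pos_divide_less_eq mult.commute)
  qed
  then show ?thesis by blast
qed

lemma proj:
  assumes M: "closed_sub sc ip M"
  shows "\<exists>m\<in>M. \<forall>u\<in>M. ip u (x - m) = 0"
proof -
  have M0: "0 \<in> M" and Madd: "\<And>a b. a \<in> M \<Longrightarrow> b \<in> M \<Longrightarrow> a + b \<in> M"
    and Msc: "\<And>c a. a \<in> M \<Longrightarrow> sc c a \<in> M"
    and Mcl: "\<And>(s::nat \<Rightarrow> 'h) l. (\<forall>n. s n \<in> M) \<Longrightarrow> (\<forall>e>0. \<exists>N. \<forall>n\<ge>N. hnorm ip (s n - l) < e) \<Longrightarrow> l \<in> M"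
    subgoal using M unfolding closed_sub_def by simp
    subgoal using M unfolding closed_sub_def by simp
    subgoal using M unfolding closed_sub_def by simp
    subgoal for s l
    proof -
      assume a: "\<forall>n. s n \<in> M" "\<forall>e>0. \<exists>N. \<forall>n\<ge>N. hnorm ip (s n - l) < e"
      have hh: "\<forall>(s::nat \<Rightarrow> 'h) l. (\<forall>n. s n \<in> M) \<and> (\<forall>e>0. \<exists>N. \<forall>n\<ge>N. hnorm ip (s n - l) < e) \<longrightarrow> l \<in> M"
        using M unfolding closed_sub_def by (elim conjE)
      show ?thesis using mp[OF spec[OF spec[OF hh, of s], of l] conjI[OF a(1) a(2)]] .
    qed
    done
  define D where "D = (\<lambda>m. hnorm ip (x - m)) ` M"
  define d where "d = Inf D"
  have Dne: "D \<noteq> {}" using M0 D_def by blast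
  have Dbdd: "bdd_below D" unfolding D_def by (rule bdd_belowI[of _ 0]) auto
  have low: "d \<le> hnorm ip (x - m)" if "m \<in> M" for m
    unfolding d_def using Dbdd that D_def by (auto intro: cInf_lower)
  have d0: "d \<ge> 0" unfolding d_def using Dne by (rule cInf_greatest) (auto simp: D_def)
  have "\<exists>m\<in>M. (hnorm ip (x - m))\<^sup>2 < d\<^sup>2 + 1 / (real n + 1)" for n :: nat
  proof -
    have "d < sqrt (d\<^sup>2 + 1 / (real n + 1))"
      by (rule real_less_rsqrt) simp
    then obtain y where "y \<in> D" "y < sqrt (d\<^sup>2 + 1 / (real n + 1))"
      using cInf_lessD[OF Dne] d_def by blast
    then obtain m where m: "m \<in> M" "hnorm ip (x - m) < sqrt (d\<^sup>2 + 1 / (real n + 1))"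
      unfolding D_def by blast
    then have "(hnorm ip (x - m))\<^sup>2 < d\<^sup>2 + 1 / (real n + 1)"
    proof -
      have "(hnorm ip (x - m))\<^sup>2 < (sqrt (d\<^sup>2 + 1 / (real n + 1)))\<^sup>2"
        using m(2) by (rule power_strict_mono) auto
      then show ?thesis by simp
    qed
    then show ?thesis using m by blast
  qed
  then have "\<forall>n. \<exists>m. m \<in> M \<and> (hnorm ip (x - m))\<^sup>2 < d\<^sup>2 + 1 / (real n + 1)" by blast
  from choice[OF this] obtain ms where msall: "\<forall>n. ms n \<in> M \<and> (hnorm ip (x - ms n))\<^sup>2 < d\<^sup>2 + 1 / (real n + 1)"
    by blast
  have msM: "\<And>n. ms n \<in> M" and ms: "\<And>n. (hnorm ip (x - ms n))\<^sup>2 < d\<^sup>2 + 1 / (real n + 1)"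
    using msall by auto
  have cau: "(hnorm ip (ms j - ms k))\<^sup>2 \<le> 2 / (real j + 1) + 2 / (real k + 1)" for j k
  proof -
    define u where "u = x - ms k"
    define v where "v = x - ms j"
    define mid where "mid = sc (1/2) (ms j + ms k)"
    have midM: "mid \<in> M" unfolding mid_def using msM Madd Msc by blast
    have "u + v = sc 2 (x - mid)"
    proof -
      have "sc 2 (x - mid) = sc 2 x - sc 2 mid" by (rule sc_diff_r)
      also have "sc 2 mid = ms j + ms k" unfolding mid_def by (simp add: sc_assoc sc_one)
      finally show ?thesis unfolding u_def v_def sc_two by (simp add: algebra_simps)
    qed
    then have "hnorm ip (u + v) = 2 * hnorm ip (x - mid)" by (simp add: hn_sc)
    then have "2 * d \<le> hnorm ip (u + v)" using low[OF midM] by simp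
    then have "(2 * d)\<^sup>2 \<le> (hnorm ip (u + v))\<^sup>2" by (rule power_mono) (use d0 in simp)
    then have "(hnorm ip (u + v))\<^sup>2 \<ge> 4 * d\<^sup>2" by (simp add: power_mult_distrib)
    moreover have "u - v = ms j - ms k" unfolding u_def v_def by simp
    moreover note paral[of u v]
    moreover have "(hnorm ip u)\<^sup>2 < d\<^sup>2 + 1 / (real k + 1)" "(hnorm ip v)\<^sup>2 < d\<^sup>2 + 1 / (real j + 1)"
      using ms unfolding u_def v_def by auto
    ultimately show ?thesis by (simp only:)
  qed
  have "\<forall>e>0. \<exists>N. \<forall>m\<ge>N. \<forall>n\<ge>N. hnorm ip (ms m - ms n) < e"
  proof (intro allI impI)
    fix e :: real assume e: "e > 0"
    obtain N :: nat where N: "\<And>n. n \<ge> N \<Longrightarrow> 2 / (real n + 1) < e\<^sup>2 / 2"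
      using archi[of "e\<^sup>2/2" 2] e by auto
    have "hnorm ip (ms m - ms n) < e" if "m \<ge> N" "n \<ge> N" for m n
    proof -
      have "(hnorm ip (ms m - ms n))\<^sup>2 < e\<^sup>2" using cau[of m n] N[OF that(1)] N[OF that(2)] by linarith
      then show ?thesis by (rule power2_less_imp_less) (use e in auto)
    qed
    then show "\<exists>N. \<forall>m\<ge>N. \<forall>n\<ge>N. hnorm ip (ms m - ms n) < e" by blast
  qed
  from complete[OF this] obtain l where l: "\<forall>e>0. \<exists>N. \<forall>n\<ge>N. hnorm ip (ms n - l) < e"
    by blast
  have lM: "l \<in> M" by (rule Mcl[OF _ l]) (simp add: msM)
  have "hnorm ip (x - l) \<le> d"
  proof (rule field_le_epsilon)
    fix e :: real assume e: "e > 0"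
    obtain N1 :: nat where N1: "\<And>n. n \<ge> N1 \<Longrightarrow> 1 / (real n + 1) < (e/2)\<^sup>2"
      using archi[of "(e/2)\<^sup>2" 1] e by auto
    have "\<exists>N. \<forall>n\<ge>N. hnorm ip (ms n - l) < e/2" using l e half_gt_zero by blast
    then obtain N2 where N2: "\<And>n. n \<ge> N2 \<Longrightarrow> hnorm ip (ms n - l) < e/2" by blast
    define n where "n = max N1 N2"
    have "(hnorm ip (x - ms n))\<^sup>2 < d\<^sup>2 + (e/2)\<^sup>2" using ms[of n] N1[of n] n_def by simp
    also have "\<dots> \<le> (d + e/2)\<^sup>2" using d0 e by (simp add: power2_sum)
    finally have "(hnorm ip (x - ms n))\<^sup>2 < (d + e/2)\<^sup>2" .
    then have "hnorm ip (x - ms n) < d + e/2"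
      by (rule power2_less_imp_less) (use d0 e in simp)
    moreover have "hnorm ip (x - l) \<le> hnorm ip (x - ms n) + hnorm ip (ms n - l)" by (rule tri_diff)
    moreover have "hnorm ip (ms n - l) < e/2" using N2 n_def by simp
    ultimately show "hnorm ip (x - l) \<le> d + e" by linarith
  qed
  then have dl: "hnorm ip (x - l) = d" using low[OF lM] by simp
  have "ip u (x - l) = 0" if uM: "u \<in> M" for u
  proof (cases "u = 0")
    case True then show ?thesis by simp
  next
    case False
    then have nu: "hnorm ip u > 0" using hn_zero_iff hn_nonneg by (metis less_eq_real_def)
    define t where "t = cnj (ip (x - l) u) / complex_of_real ((hnorm ip u)\<^sup>2)"
    have "l + sc t u \<in> M" using lM uM Madd Msc by blast
    then have "d \<le> hnorm ip (x - (l + sc t u))" by (rule low)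
    also have "x - (l + sc t u) = (x - l) - sc t u" by simp
    finally have "d \<le> hnorm ip ((x - l) - sc t u)" .
    then have "d\<^sup>2 \<le> (hnorm ip ((x - l) - sc t u))\<^sup>2" by (rule power_mono[OF _ d0])
    also have "\<dots> = d\<^sup>2 - (cmod (ip (x - l) u))\<^sup>2 / (hnorm ip u)\<^sup>2"
      unfolding t_def key[OF False] dl ..
    finally have "(cmod (ip (x - l) u))\<^sup>2 / (hnorm ip u)\<^sup>2 \<le> 0" by simp
    then have "(cmod (ip (x - l) u))\<^sup>2 \<le> 0" using nu by (simp add: divide_le_0_iff)
    then have "ip (x - l) u = 0" by simp
    then show ?thesis by (subst ip_cnj) simp
  qed
  then show ?thesis using lM by blast
qed

lemma le_eps0: "(\<And>e. e > 0 \<Longrightarrow> (r::real) < e) \<Longrightarrow> r \<le> 0"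
  by (metis less_irrefl not_le)

lemma riesz:
  fixes f :: "'h \<Rightarrow> complex"
  assumes fadd: "\<And>x y. f (x + y) = f x + f y" and fhom: "\<And>a x. f (sc a x) = a * f x"
    and fbnd: "\<And>x. cmod (f x) \<le> C * hnorm ip x"
  shows "\<exists>r. \<forall>x. f x = ip r x"
proof (cases "\<forall>x. f x = 0")
  case True then show ?thesis by (intro exI[of _ 0]) simp
next
  case False
  then obtain x0 where fx0: "f x0 \<noteq> 0" by blast
  have f0: "f 0 = 0" using fadd[of 0 0] by simp
  have fdiff: "f (x - y) = f x - f y" for x y using fadd[of "x - y" y] by simp
  define C' where "C' = max C 1"
  have C'pos: "C' > 0" unfolding C'_def by simp
  have fb: "cmod (f x) \<le> C' * hnorm ip x" for x
  proof -
    have "C * hnorm ip x \<le> C' * hnorm ip x" unfolding C'_def by (rule mult_right_mono) auto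
    then show ?thesis using fbnd[of x] by linarith
  qed
  define N where "N = {x. f x = 0}"
  have Ncl: "closed_sub sc ip N"
    unfolding closed_sub_def
  proof (intro conjI ballI allI impI)
    show "0 \<in> N" using f0 N_def by simp
    show "x + y \<in> N" if "x \<in> N" "y \<in> N" for x y using that fadd N_def by simp
    show "sc a x \<in> N" if "x \<in> N" for a x using that fhom N_def by simp
    fix s :: "nat \<Rightarrow> 'h" and l
    assume a: "(\<forall>n. s n \<in> N) \<and> (\<forall>e>0. \<exists>N. \<forall>n\<ge>N. hnorm ip (s n - l) < e)"
    have "cmod (f l) \<le> 0"
    proof (rule le_eps0)
      fix e :: real assume e: "e > 0"
      then have "e / C' > 0" using C'pos by simp
      then obtain n where n: "hnorm ip (s n - l) < e / C'" using a by blast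
      have "f l = - f (s n - l)" using a fdiff[of "s n" l] N_def by simp
      then have "cmod (f l) \<le> C' * hnorm ip (s n - l)" using fb[of "s n - l"] by simp
      also have "\<dots> < C' * (e / C')" by (rule mult_strict_left_mono[OF n C'pos])
      finally show "cmod (f l) < e" using C'pos by simp
    qed
    then show "l \<in> N" unfolding N_def by simp
  qed
  obtain m where mN: "m \<in> N" and orth: "\<And>u. u \<in> N \<Longrightarrow> ip u (x0 - m) = 0"
    using proj[OF Ncl, of x0] by blast
  define z where "z = x0 - m"
  have fz: "f z = f x0" using mN fdiff N_def z_def by simp
  have "z \<noteq> 0" using fz fx0 f0 by auto
  then have zz: "ip z z \<noteq> 0" using ip_def by blast
  have main: "f x = ip (sc (cnj (f z / ip z z)) z) x" for x
  proof -
    define u where "u = sc (f z) x - sc (f x) z"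
    have "f u = 0" unfolding u_def by (simp add: fdiff fhom)
    then have "ip u z = 0" using orth N_def z_def by simp
    then have "ip z u = 0" by (subst ip_cnj) simp
    then have "f z * ip z x - f x * ip z z = 0" unfolding u_def by (simp add: ip_diff_r ip_scr)
    then have "f x = f z * ip z x / ip z z" using zz by (simp add: field_simps)
    then show ?thesis by (simp add: ip_scl)
  qed
  then show ?thesis by blast
qed

lemma adjoint_exists:
  assumes "bounded_op sc ip A"
  shows "\<exists>B. \<forall>x y. ip (A x) y = ip x (B y)"
proof -
  from assms obtain C where Aadd: "\<And>x y. A (x + y) = A x + A y" and Ahom: "\<And>a x. A (sc a x) = sc a (A x)"
    and Ab: "\<And>x. hnorm ip (A x) \<le> C * hnorm ip x"
    unfolding bounded_op_def by blast
  have "\<exists>r. \<forall>x. ip y (A x) = ip r x" for y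
  proof (rule riesz)
    show "ip y (A (x + z)) = ip y (A x) + ip y (A z)" for x z by (simp add: Aadd ip_addr)
    show "ip y (A (sc a x)) = a * ip y (A x)" for a x by (simp add: Ahom ip_scr)
    show "cmod (ip y (A x)) \<le> (hnorm ip y * C) * hnorm ip x" for x
    proof -
      have "cmod (ip y (A x)) \<le> hnorm ip y * hnorm ip (A x)" by (rule CS)
      also have "\<dots> \<le> hnorm ip y * (C * hnorm ip x)" by (rule mult_left_mono[OF Ab hn_nonneg])
      finally show ?thesis by (simp add: mult.assoc)
    qed
  qed
  then have "\<forall>y. \<exists>r. \<forall>x. ip y (A x) = ip r x" by blast
  from choice[OF this] obtain B where B: "\<forall>y x. ip y (A x) = ip (B y) x" by blast
  have "ip (A x) y = ip x (B y)" for x y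
    by (subst ip_cnj, subst (2) ip_cnj) (simp add: B[rule_format, symmetric])
  then show ?thesis by blast
qed

lemma adj_prop:
  assumes "bounded_op sc ip A"
  shows "ip (A x) y = ip x (adj ip A y)"
proof -
  have "\<forall>x y. ip (A x) y = ip x (adj ip A y)"
    unfolding adj_def using someI_ex[OF adjoint_exists[OF assms]] .
  then show ?thesis by blast
qed

lemma adj_diff:
  assumes "\<And>x y. ip (A x) y = ip x (B y)"
  shows "B (u - v) = B u - B v"
  by (rule ip_unique) (simp add: ip_diff_r assms[symmetric])

lemma lin_sum:
  fixes P :: "'c::ab_group_add \<Rightarrow> 'd::ab_group_add"
  assumes add: "\<And>x y. P (x + y) = P x + P y"
  shows "P (sum h F) = (\<Sum>f\<in>F. P (h f))"
proof -
  have P0: "P 0 = 0" using add[of 0 0] by simp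
  show ?thesis
  proof (cases "finite F")
    case True then show ?thesis by (induction F rule: finite_induct) (simp_all add: P0 add)
  next
    case False then show ?thesis by (simp add: P0)
  qed
qed

lemma inv_add:
  assumes "bij P" "\<And>x y. P (x + y) = P x + P y"
  shows "inv P (x + y) = inv P x + inv P y"
proof -
  have "inv P x + inv P y = inv P (x + y)" unfolding bij_inv_eq_iff[OF assms(1)]
    using assms by (simp add: bij_is_surj surj_f_inv_f)
  then show ?thesis by simp
qed

lemma inv_hom:
  assumes "bij P" "\<And>a x. P (sc a x) = sc a (P x)"
  shows "inv P (sc a x) = sc a (inv P x)"
proof -
  have "sc a (inv P x) = inv P (sc a x)" unfolding bij_inv_eq_iff[OF assms(1)]
    using assms by (simp add: bij_is_surj surj_f_inv_f)
  then show ?thesis by simp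
qed

lemma fin_codim_image:
  assumes M: "fin_codim_subspace sc ip M" and bij: "bij P"
    and add: "\<And>x y. P (x + y) = P x + P y" and hom: "\<And>a x. P (sc a x) = sc a (P x)"
    and bnd: "\<And>x. hnorm ip (inv P x) \<le> C * hnorm ip x"
  shows "fin_codim_subspace sc ip (P ` M)"
proof -
  define Q where "Q = inv P"
  have PQ: "P (Q x) = x" for x using bij unfolding Q_def by (simp add: bij_is_surj surj_f_inv_f)
  have QP: "Q (P x) = x" for x using bij unfolding Q_def by (simp add: bij_is_inj)
  have Qadd: "Q (x + y) = Q x + Q y" for x y unfolding Q_def by (rule inv_add[OF bij add])
  have Qdiff: "Q (x - y) = Q x - Q y" for x y using Qadd[of "x - y" y] by simp
  have P0: "P 0 = 0" using add[of 0 0] by simp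
  have M0: "0 \<in> M" and Madd: "\<And>a b. a \<in> M \<Longrightarrow> b \<in> M \<Longrightarrow> a + b \<in> M"
    and Msc: "\<And>c a. a \<in> M \<Longrightarrow> sc c a \<in> M"
    and Mcl': "\<forall>(s::nat \<Rightarrow> 'h) l. (\<forall>n. s n \<in> M) \<and> (\<forall>e>0. \<exists>N. \<forall>n\<ge>N. hnorm ip (s n - l) < e) \<longrightarrow> l \<in> M"
    and Mfin: "\<exists>F. finite F \<and> (\<forall>x. \<exists>m\<in>M. \<exists>c. x = m + (\<Sum>f\<in>F. sc (c f) f))"
    using M unfolding fin_codim_subspace_def by simp_all
  define C' where "C' = max C 1"
  have C'pos: "C' > 0" unfolding C'_def by simp
  have qb: "hnorm ip (Q x) \<le> C' * hnorm ip x" for x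
  proof -
    have "C * hnorm ip x \<le> C' * hnorm ip x" unfolding C'_def by (rule mult_right_mono) auto
    then show ?thesis using bnd[of x] unfolding Q_def by linarith
  qed
  show ?thesis unfolding fin_codim_subspace_def
  proof (intro conjI)
    show "0 \<in> P ` M" using M0 P0 by (metis image_eqI)
    show "\<forall>x\<in>P ` M. \<forall>y\<in>P ` M. x + y \<in> P ` M" using Madd add by (auto simp flip: add)
    show "\<forall>a. \<forall>x\<in>P ` M. sc a x \<in> P ` M" using Msc hom by (auto simp flip: hom)
    show "\<forall>(s::nat \<Rightarrow> 'h) l. (\<forall>n. s n \<in> P ` M) \<and> (\<forall>e>0. \<exists>N. \<forall>n\<ge>N. hnorm ip (s n - l) < e) \<longrightarrow> l \<in> P ` M"
    proof (intro allI impI)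
      fix s :: "nat \<Rightarrow> 'h" and l
      assume a: "(\<forall>n. s n \<in> P ` M) \<and> (\<forall>e>0. \<exists>N. \<forall>n\<ge>N. hnorm ip (s n - l) < e)"
      have tM: "\<forall>n. Q (s n) \<in> M"
      proof
        fix n
        obtain m where "m \<in> M" "s n = P m" using a by blast
        then show "Q (s n) \<in> M" by (simp add: QP)
      qed
      have tc: "\<forall>e>0. \<exists>N. \<forall>n\<ge>N. hnorm ip (Q (s n) - Q l) < e"
      proof (intro allI impI)
        fix e :: real assume e: "e > 0"
        then have "e / C' > 0" using C'pos by simp
        then obtain N where N: "\<forall>n\<ge>N. hnorm ip (s n - l) < e / C'" using a by blast
        have "hnorm ip (Q (s n) - Q l) < e" if "n \<ge> N" for n
        proof -
          have "hnorm ip (Q (s n) - Q l) \<le> C' * hnorm ip (s n - l)" using qb[of "s n - l"] by (simp add: Qdiff)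
          also have "\<dots> < C' * (e / C')" by (rule mult_strict_left_mono[OF N[rule_format, OF that] C'pos])
          finally show ?thesis using C'pos by simp
        qed
        then show "\<exists>N. \<forall>n\<ge>N. hnorm ip (Q (s n) - Q l) < e" by blast
      qed
      have "Q l \<in> M" using mp[OF spec[OF spec[OF Mcl', of "\<lambda>n. Q (s n)"], of "Q l"] conjI[OF tM tc]] .
      then show "l \<in> P ` M" using PQ by (metis image_eqI)
    qed
    from Mfin obtain F where Ffin: "finite F" and Fsp: "\<forall>x. \<exists>m\<in>M. \<exists>c. x = m + (\<Sum>f\<in>F. sc (c f) f)"
      by blast
    have "\<forall>x. \<exists>m\<in>P ` M. \<exists>c. x = m + (\<Sum>g\<in>P ` F. sc (c g) g)"
    proof
      fix x
      obtain m c where m: "m \<in> M" and mc: "Q x = m + (\<Sum>f\<in>F. sc (c f) f)" using Fsp by blast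
      have "x = P (Q x)" by (simp add: PQ)
      also have "\<dots> = P m + (\<Sum>f\<in>F. sc (c f) (P f))" unfolding mc add lin_sum[of P, OF add] hom ..
      also have "(\<Sum>f\<in>F. sc (c f) (P f)) = (\<Sum>g\<in>P ` F. sc ((c \<circ> Q) g) g)"
      proof -
        have "inj_on P F" using bij bij_is_inj inj_on_subset by blast
        then have "(\<Sum>g\<in>P ` F. sc ((c \<circ> Q) g) g) = (\<Sum>f\<in>F. sc ((c \<circ> Q) (P f)) (P f))"
          by (rule sum.reindex_cong) auto
        then show ?thesis by (simp add: QP)
      qed
      finally show "\<exists>m\<in>P ` M. \<exists>c. x = m + (\<Sum>g\<in>P ` F. sc (c g) g)" using m by blast
    qed
    then show "\<exists>F. finite F \<and> (\<forall>x. \<exists>m\<in>P ` M. \<exists>c. x = m + (\<Sum>f\<in>F. sc (c f) f))"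
      using Ffin by blast
  qed
qed

lemma gess_transfer:
  assumes bij: "bij P"
    and add: "\<And>x y. P (x + y) = P x + P y" and hom: "\<And>a x. P (sc a x) = sc a (P x)"
    and bnd1: "\<And>x. hnorm ip (P x) \<le> C1 * hnorm ip x"
    and bnd2: "\<And>x. hnorm ip (inv P x) \<le> C2 * hnorm ip x"
    and q1: "\<And>z. (hnorm ip (P z))\<^sup>2 + (hnorm ip (A (P z)))\<^sup>2 = (hnorm ip z)\<^sup>2 + (hnorm ip (B z))\<^sup>2"
    and q2: "\<And>z. (hnorm ip (A (P z) - P z))\<^sup>2 = (hnorm ip (B z - z))\<^sup>2"
  shows "gess sc ip A = gess sc ip B"
  unfolding gess_def
proof (rule arg_cong[where f=Sup], rule Collect_cong, rule conj_cong[OF refl], rule iffI)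
  fix g :: real
  assume "\<exists>M. fin_codim_subspace sc ip M \<and> (\<forall>x\<in>M. g * ((hnorm ip x)\<^sup>2 + (hnorm ip (A x))\<^sup>2) \<le> (hnorm ip (A x - x))\<^sup>2)"
  then obtain M where M: "fin_codim_subspace sc ip M"
    and ineq: "\<forall>x\<in>M. g * ((hnorm ip x)\<^sup>2 + (hnorm ip (A x))\<^sup>2) \<le> (hnorm ip (A x - x))\<^sup>2" by blast
  define Q where "Q = inv P"
  have bijQ: "bij Q" unfolding Q_def by (rule bij_imp_bij_inv[OF bij])
  have PQ: "P (Q x) = x" for x using bij unfolding Q_def by (simp add: bij_is_surj surj_f_inv_f)
  have QQ: "inv Q = P" unfolding Q_def by (rule inv_inv_eq[OF bij])
  have "fin_codim_subspace sc ip (Q ` M)"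
    by (rule fin_codim_image[OF M bijQ, of C1]) (simp_all add: Q_def inv_add[OF bij add] inv_hom[OF bij hom] QQ[unfolded Q_def] bnd1)
  moreover have "\<forall>z\<in>Q ` M. g * ((hnorm ip z)\<^sup>2 + (hnorm ip (B z))\<^sup>2) \<le> (hnorm ip (B z - z))\<^sup>2"
  proof
    fix z assume "z \<in> Q ` M"
    then obtain w where w: "w \<in> M" "z = Q w" by blast
    then have Pz: "P z = w" by (simp add: PQ)
    have "g * ((hnorm ip (P z))\<^sup>2 + (hnorm ip (A (P z)))\<^sup>2) \<le> (hnorm ip (A (P z) - P z))\<^sup>2"
      using ineq w(1) Pz by blast
    then show "g * ((hnorm ip z)\<^sup>2 + (hnorm ip (B z))\<^sup>2) \<le> (hnorm ip (B z - z))\<^sup>2"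
      unfolding q1 q2 .
  qed
  ultimately show "\<exists>M. fin_codim_subspace sc ip M \<and> (\<forall>x\<in>M. g * ((hnorm ip x)\<^sup>2 + (hnorm ip (B x))\<^sup>2) \<le> (hnorm ip (B x - x))\<^sup>2)"
    by blast
next
  fix g :: real
  assume "\<exists>M. fin_codim_subspace sc ip M \<and> (\<forall>x\<in>M. g * ((hnorm ip x)\<^sup>2 + (hnorm ip (B x))\<^sup>2) \<le> (hnorm ip (B x - x))\<^sup>2)"
  then obtain M where M: "fin_codim_subspace sc ip M"
    and ineq: "\<forall>x\<in>M. g * ((hnorm ip x)\<^sup>2 + (hnorm ip (B x))\<^sup>2) \<le> (hnorm ip (B x - x))\<^sup>2" by blast
  have "fin_codim_subspace sc ip (P ` M)"
    by (rule fin_codim_image[OF M bij add hom bnd2])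
  moreover have "\<forall>x\<in>P ` M. g * ((hnorm ip x)\<^sup>2 + (hnorm ip (A x))\<^sup>2) \<le> (hnorm ip (A x - x))\<^sup>2"
  proof
    fix x assume "x \<in> P ` M"
    then obtain z where z: "z \<in> M" "x = P z" by blast
    have "g * ((hnorm ip z)\<^sup>2 + (hnorm ip (B z))\<^sup>2) \<le> (hnorm ip (B z - z))\<^sup>2"
      using ineq z(1) by blast
    then show "g * ((hnorm ip x)\<^sup>2 + (hnorm ip (A x))\<^sup>2) \<le> (hnorm ip (A x - x))\<^sup>2"
      unfolding z(2) q1 q2 .
  qed
  ultimately show "\<exists>M. fin_codim_subspace sc ip M \<and> (\<forall>x\<in>M. g * ((hnorm ip x)\<^sup>2 + (hnorm ip (A x))\<^sup>2) \<le> (hnorm ip (A x - x))\<^sup>2)"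
    by blast
qed

end

lemma gval_transfer:
  assumes "surj P"
    and q1: "\<And>z. (hnorm ip (P z))\<^sup>2 + (hnorm ip (A (P z)))\<^sup>2 = (hnorm ip z)\<^sup>2 + (hnorm ip (B z))\<^sup>2"
    and q2: "\<And>z. (hnorm ip (A (P z) - P z))\<^sup>2 = (hnorm ip (B z - z))\<^sup>2"
  shows "gval ip A = gval ip B"
  unfolding gval_def
proof (rule arg_cong[where f=Sup], rule Collect_cong, rule conj_cong[OF refl], rule iffI)
  fix g :: real
  assume h: "\<forall>x. g * ((hnorm ip x)\<^sup>2 + (hnorm ip (A x))\<^sup>2) \<le> (hnorm ip (A x - x))\<^sup>2"
  show "\<forall>x. g * ((hnorm ip x)\<^sup>2 + (hnorm ip (B x))\<^sup>2) \<le> (hnorm ip (B x - x))\<^sup>2"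
  proof
    fix z show "g * ((hnorm ip z)\<^sup>2 + (hnorm ip (B z))\<^sup>2) \<le> (hnorm ip (B z - z))\<^sup>2"
      using h[rule_format, of "P z"] unfolding q1 q2 .
  qed
next
  fix g :: real
  assume h: "\<forall>x. g * ((hnorm ip x)\<^sup>2 + (hnorm ip (B x))\<^sup>2) \<le> (hnorm ip (B x - x))\<^sup>2"
  show "\<forall>x. g * ((hnorm ip x)\<^sup>2 + (hnorm ip (A x))\<^sup>2) \<le> (hnorm ip (A x - x))\<^sup>2"
  proof
    fix x
    obtain z where z: "x = P z" using assms(1) by (metis surjD)
    show "g * ((hnorm ip x)\<^sup>2 + (hnorm ip (A x))\<^sup>2) \<le> (hnorm ip (A x - x))\<^sup>2"
      using h[rule_format, of z] unfolding z q1 q2 .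
  qed
qed



lemma bij_pair:
  assumes "\<And>x. g (f x) = x" "\<And>y. f (g y) = y"
  shows "bij f" "inv f = g"
proof -
  show "bij f" by (rule bijI') (metis assms(1), metis assms(2))
  show "inv f = g" by (rule inv_equality) (use assms in auto)
qed

context hs begin

lemma hnK_sq: "(hnorm (ipK ip) z)\<^sup>2 = (hnorm ip (fst z))\<^sup>2 + (hnorm ip (snd z))\<^sup>2"
proof -
  have "hnorm (ipK ip) z = sqrt (Re (ip (fst z) (fst z)) + Re (ip (snd z) (snd z)))"
    by (simp add: hnorm_def ipK_def)
  then show ?thesis using ip_pos[of "fst z"] ip_pos[of "snd z"] by (simp add: hn_sq)
qed

lemma hnK_nonneg: "hnorm (ipK ip) z \<ge> 0"
proof -
  have "hnorm (ipK ip) z = sqrt (Re (ip (fst z) (fst z)) + Re (ip (snd z) (snd z)))"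
    by (simp add: hnorm_def ipK_def)
  then show ?thesis using ip_pos[of "fst z"] ip_pos[of "snd z"] by simp
qed

lemma hnK_fst: "hnorm ip (fst z) \<le> hnorm (ipK ip) z"
proof -
  have "(hnorm ip (fst z))\<^sup>2 \<le> (hnorm (ipK ip) z)\<^sup>2" by (simp add: hnK_sq)
  then show ?thesis by (rule power2_le_imp_le) (rule hnK_nonneg)
qed

lemma hnK_snd: "hnorm ip (snd z) \<le> hnorm (ipK ip) z"
proof -
  have "(hnorm ip (snd z))\<^sup>2 \<le> (hnorm (ipK ip) z)\<^sup>2" by (simp add: hnK_sq)
  then show ?thesis by (rule power2_le_imp_le) (rule hnK_nonneg)
qed

lemma hnK_le: "hnorm (ipK ip) z \<le> hnorm ip (fst z) + hnorm ip (snd z)"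
proof -
  have "(hnorm (ipK ip) z)\<^sup>2 \<le> (hnorm ip (fst z) + hnorm ip (snd z))\<^sup>2"
    by (simp add: hnK_sq power2_sum)
  then show ?thesis by (rule power2_le_imp_le) simp
qed

lemma hs_K: "hs (scK sc) (ipK ip)"
proof
  fix x :: "'h \<times> 'h" and a b :: complex and y z :: "'h \<times> 'h"
  show "scK sc 1 x = x" by (simp add: scK_def sc_one)
  show "scK sc a (scK sc b x) = scK sc (a * b) x" by (simp add: scK_def sc_assoc)
  show "scK sc (a + b) x = scK sc a x + scK sc b x" by (simp add: scK_def sc_addl)
  show "scK sc a (x + y) = scK sc a x + scK sc a y" by (simp add: scK_def sc_addr)
  show "ipK ip x (y + z) = ipK ip x y + ipK ip x z" by (simp add: ipK_def ip_addr)
  show "ipK ip x (scK sc a y) = a * ipK ip x y" by (simp add: ipK_def scK_def ip_scr algebra_simps)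
  show "ipK ip x y = cnj (ipK ip y x)" by (simp add: ipK_def cnj_ip)
  show "Re (ipK ip x x) \<ge> 0" using ip_pos[of "fst x"] ip_pos[of "snd x"] by (simp add: ipK_def)
  show "ipK ip x x = 0 \<Longrightarrow> x = 0"
  proof -
    assume h: "ipK ip x x = 0"
    then have "Re (ip (fst x) (fst x) + ip (snd x) (snd x)) = 0" by (simp add: ipK_def)
    then have "Re (ip (fst x) (fst x)) + Re (ip (snd x) (snd x)) = 0" by (simp only: plus_complex.sel)
    then have "Re (ip (fst x) (fst x)) = 0" "Re (ip (snd x) (snd x)) = 0"
      using ip_pos[of "fst x"] ip_pos[of "snd x"] by linarith+
    then have "ip (fst x) (fst x) = 0" "ip (snd x) (snd x) = 0"
      using ip_self_real[of "fst x"] ip_self_real[of "snd x"] by simp_all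
    then have "fst x = 0" "snd x = 0" using ip_def by blast+
    then show "x = 0" by (simp add: prod_eq_iff)
  qed
next
  fix s :: "nat \<Rightarrow> 'h \<times> 'h"
  assume cau: "\<forall>e>0. \<exists>N::nat. \<forall>m\<ge>N. \<forall>n\<ge>N. hnorm (ipK ip) (s m - s n) < e"
  have "\<forall>e>0. \<exists>N::nat. \<forall>m\<ge>N. \<forall>n\<ge>N. hnorm ip (fst (s m) - fst (s n)) < e"
  proof (intro allI impI)
    fix e :: real assume "e > 0"
    then obtain N where N: "\<forall>m\<ge>N. \<forall>n\<ge>N. hnorm (ipK ip) (s m - s n) < e" using cau by blast
    have "hnorm ip (fst (s m) - fst (s n)) < e" if "m \<ge> N" "n \<ge> N" for m n
      using hnK_fst[of "s m - s n"] N that by fastforce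
    then show "\<exists>N. \<forall>m\<ge>N. \<forall>n\<ge>N. hnorm ip (fst (s m) - fst (s n)) < e" by blast
  qed
  from complete[OF this] obtain l1 where l1: "\<forall>e>0. \<exists>N. \<forall>n\<ge>N. hnorm ip (fst (s n) - l1) < e" by blast
  have "\<forall>e>0. \<exists>N::nat. \<forall>m\<ge>N. \<forall>n\<ge>N. hnorm ip (snd (s m) - snd (s n)) < e"
  proof (intro allI impI)
    fix e :: real assume "e > 0"
    then obtain N where N: "\<forall>m\<ge>N. \<forall>n\<ge>N. hnorm (ipK ip) (s m - s n) < e" using cau by blast
    have "hnorm ip (snd (s m) - snd (s n)) < e" if "m \<ge> N" "n \<ge> N" for m n
      using hnK_snd[of "s m - s n"] N that by fastforce
    then show "\<exists>N. \<forall>m\<ge>N. \<forall>n\<ge>N. hnorm ip (snd (s m) - snd (s n)) < e" by blast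
  qed
  from complete[OF this] obtain l2 where l2: "\<forall>e>0. \<exists>N. \<forall>n\<ge>N. hnorm ip (snd (s n) - l2) < e" by blast
  have "\<forall>e>0. \<exists>N. \<forall>n\<ge>N. hnorm (ipK ip) (s n - (l1, l2)) < e"
  proof (intro allI impI)
    fix e :: real assume e: "e > 0"
    then have e2: "e/2 > 0" by simp
    obtain N1 where N1: "\<forall>n\<ge>N1. hnorm ip (fst (s n) - l1) < e/2" using l1 e2 by blast
    obtain N2 where N2: "\<forall>n\<ge>N2. hnorm ip (snd (s n) - l2) < e/2" using l2 e2 by blast
    have "hnorm (ipK ip) (s n - (l1, l2)) < e" if "n \<ge> max N1 N2" for n
    proof -
      have "hnorm (ipK ip) (s n - (l1, l2)) \<le> hnorm ip (fst (s n) - l1) + hnorm ip (snd (s n) - l2)"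
        using hnK_le[of "s n - (l1, l2)"] by simp
      moreover have "hnorm ip (fst (s n) - l1) < e/2" using N1 that by simp
      moreover have "hnorm ip (snd (s n) - l2) < e/2" using N2 that by simp
      ultimately show ?thesis by linarith
    qed
    then show "\<exists>N. \<forall>n\<ge>N. hnorm (ipK ip) (s n - (l1, l2)) < e" by blast
  qed
  then show "\<exists>l. \<forall>e>0. \<exists>N. \<forall>n\<ge>N. hnorm (ipK ip) (s n - l) < e" by blast
qed

end


lemma hs_of_sep: "separable_complex_hilbert sc ip \<Longrightarrow> hs sc ip"
  unfolding separable_complex_hilbert_def hs_def by (elim conjE) (intro conjI; blast)

lemma Jop_Jop[simp]: "Jop (Jop z) = z" by (simp add: Jop_def)
lemma Jop_pair[simp]: "Jop (u, v) = (u, - v)" by (simp add: Jop_def)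

theorem proposition4p5:
  fixes sc :: "complex \<Rightarrow> 'h::ab_group_add \<Rightarrow> 'h"
    and ip :: "'h \<Rightarrow> 'h \<Rightarrow> complex"
    and T :: "'h \<times> 'h \<Rightarrow> 'h \<times> 'h"
  assumes "separable_complex_hilbert sc ip"
    and "J_unitary sc ip T"
  shows "gval (ipK ip) (Vop ip T) = gval (ipK ip) T \<and>
     gess (scK sc) (ipK ip) (Vop ip T) = gess (scK sc) (ipK ip) T \<and>
     gval (ipK ip) T = gval (ipK ip) (adj (ipK ip) T) \<and>
     gval (ipK ip) T = gval (ipK ip) (inv T) \<and>
     gess (scK sc) (ipK ip) T = gess (scK sc) (ipK ip) (adj (ipK ip) T) \<and>
     gess (scK sc) (ipK ip) T = gess (scK sc) (ipK ip) (inv T)"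
proof -
  interpret H: hs sc ip by (rule hs_of_sep[OF assms(1)])
  interpret K: hs "scK sc" "ipK ip" by (rule H.hs_K)
  have Tb: "bounded_op (scK sc) (ipK ip) T" and Tbij: "bij T"
    and Tib: "bounded_op (scK sc) (ipK ip) (inv T)"
    and JU: "\<And>z. adj (ipK ip) T (Jop (T z)) = Jop z"
    using assms(2) unfolding J_unitary_def by blast+
  obtain C0 where Tadd: "\<And>x y. T (x + y) = T x + T y" and Thom: "\<And>a x. T (scK sc a x) = scK sc a (T x)"
    and Tb0: "\<And>x. hnorm (ipK ip) (T x) \<le> C0 * hnorm (ipK ip) x"
    using Tb unfolding bounded_op_def by blast
  define C where "C = max C0 0"
  have C0: "C \<ge> 0" unfolding C_def by simp
  have Tbnd: "hnorm (ipK ip) (T x) \<le> C * hnorm (ipK ip) x" for x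
  proof -
    have "C0 * hnorm (ipK ip) x \<le> C * hnorm (ipK ip) x" unfolding C_def
      by (rule mult_right_mono) (auto simp: K.hn_nonneg)
    then show ?thesis using Tb0[of x] by linarith
  qed
  obtain Ci where Tiadd: "\<And>x y. inv T (x + y) = inv T x + inv T y"
    and Tibnd: "\<And>x. hnorm (ipK ip) (inv T x) \<le> Ci * hnorm (ipK ip) x"
    using Tib unfolding bounded_op_def by blast
  have TiT: "inv T (T z) = z" for z using Tbij by (simp add: bij_is_inj)
  have TTi: "T (inv T w) = w" for w using Tbij by (simp add: bij_is_surj surj_f_inv_f)
  have T0: "T 0 = 0" using Tadd[of 0 0] by simp
  have Tminus: "T (- x) = - T x" for x
  proof -
    have "T x + T (- x) = 0" using Tadd[of x "- x"] T0 by simp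
    then show ?thesis by (metis minus_unique)
  qed
  define B where "B = adj (ipK ip) T"
  have Badj: "ipK ip (T z) w = ipK ip z (B w)" for z w unfolding B_def by (rule K.adj_prop[OF Tb])
  have JUB: "B (Jop (T z)) = Jop z" for z unfolding B_def by (rule JU)
  have Binv: "B w = Jop (inv T (Jop w))" for w
    using JUB[of "inv T (Jop w)"] by (simp add: TTi)
  have ipJ: "ipK ip (Jop z) w = ipK ip z (Jop w)" for z w by (simp add: Jop_def ipK_def)
  have Jiso: "ipK ip (Jop z) w = ipK ip (Jop (T z)) (T w)" for z w
  proof -
    have "ipK ip (Jop z) w = ipK ip (B (Jop (T z))) w" by (simp add: JUB)
    also have "\<dots> = cnj (ipK ip w (B (Jop (T z))))" by (rule K.ip_cnj)
    also have "\<dots> = cnj (ipK ip (T w) (Jop (T z)))" by (simp add: Badj)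
    also have "\<dots> = ipK ip (Jop (T z)) (T w)" by (rule K.cnj_ip)
    finally show ?thesis .
  qed
  define a where "a = blk_a T"
  define b where "b = blk_b T"
  define c where "c = blk_c T"
  define d where "d = blk_d T"
  have ad: "a x = fst (T (x, 0))" for x by (simp add: a_def blk_a_def)
  have bd: "b x = fst (T (0, x))" for x by (simp add: b_def blk_b_def)
  have cd: "c x = snd (T (x, 0))" for x by (simp add: c_def blk_c_def)
  have dd: "d x = snd (T (0, x))" for x by (simp add: d_def blk_d_def)
  have Tsplit: "T (x1, x2) = (a x1 + b x2, c x1 + d x2)" for x1 x2
  proof -
    have "T (x1, x2) = T ((x1, 0) + (0, x2))" by simp
    also have "\<dots> = T (x1, 0) + T (0, x2)" by (rule Tadd)
    finally show ?thesis by (simp add: ad bd cd dd prod_eq_iff)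
  qed
  have T2: "T (0, x + y) = T (0, x) + T (0, y)" for x y using Tadd[of "(0, x)" "(0, y)"] by simp
  have T1: "T (x + y, 0) = T (x, 0) + T (y, 0)" for x y using Tadd[of "(x, 0)" "(y, 0)"] by simp
  have badd: "b (x + y) = b x + b y" for x y by (simp add: bd T2)
  have dadd: "d (x + y) = d x + d y" for x y by (simp add: dd T2)
  have cadd: "c (x + y) = c x + c y" for x y by (simp add: cd T1)
  have aadd: "a (x + y) = a x + a y" for x y by (simp add: ad T1)
  have dminus: "d (- x) = - d x" for x using Tminus[of "(0, x)"] by (simp add: dd)
  have bminus: "b (- x) = - b x" for x using Tminus[of "(0, x)"] by (simp add: bd)
  have cminus: "c (- x) = - c x" for x using Tminus[of "(x, 0)"] by (simp add: cd)
  have T00: "T (0, 0) = 0" using T0 by (simp add: zero_prod_def)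
  have d0: "d 0 = 0" using T00 by (simp add: dd)
  have ddiff: "d (x - y) = d x - d y" for x y using dadd[of x "- y"] dminus[of y] by simp
  have bdiff: "b (x - y) = b x - b y" for x y using badd[of x "- y"] bminus[of y] by simp
  have cdiff: "c (x - y) = c x - c y" for x y using cadd[of x "- y"] cminus[of y] by simp
  have dhom: "d (sc t x) = sc t (d x)" for t x
    using Thom[of t "(0, x)"] by (simp add: dd scK_def)
  have hnKp: "(hnorm (ipK ip) (u, v))\<^sup>2 = (hnorm ip u)\<^sup>2 + (hnorm ip v)\<^sup>2" for u v
    using H.hnK_sq[of "(u, v)"] by simp
  have dsq: "(hnorm ip (d x))\<^sup>2 = (hnorm ip x)\<^sup>2 + (hnorm ip (b x))\<^sup>2" for x
  proof -
    have "ipK ip (Jop (0, x)) (0, x) = ipK ip (Jop (T (0, x))) (T (0, x))" by (rule Jiso)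
    then have "- ip x x = ip (b x) (b x) - ip (d x) (d x)"
      by (simp add: ipK_def Jop_def bd dd)
    then have "- Re (ip x x) = Re (ip (b x) (b x)) - Re (ip (d x) (d x))"
      by (metis minus_complex.sel(1) uminus_complex.sel(1))
    then show ?thesis by (simp add: H.hn_sq)
  qed
  have dlow: "hnorm ip x \<le> hnorm ip (d x)" for x
  proof -
    have "(hnorm ip x)\<^sup>2 \<le> (hnorm ip (d x))\<^sup>2" using dsq[of x] by simp
    then show ?thesis by (rule power2_le_imp_le) simp
  qed
  have dinj: "inj d"
  proof (rule injI)
    fix x y assume "d x = d y"
    then have "d (x - y) = 0" by (simp add: ddiff)
    then have "hnorm ip (x - y) \<le> 0" using dlow[of "x - y"] by simp
    then show "x = y" using H.hn_nonneg[of "x - y"] H.hn_zero_iff[of "x - y"] by simp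
  qed
  have dbnd: "hnorm ip (d x) \<le> C * hnorm ip x" for x
  proof -
    have "hnorm ip (d x) \<le> hnorm (ipK ip) (T (0, x))" unfolding dd by (rule H.hnK_snd)
    also have "\<dots> \<le> C * hnorm (ipK ip) (0, x)" by (rule Tbnd)
    also have "hnorm (ipK ip) (0, x) = hnorm ip x"
      using hnKp[of 0 x] H.hnK_nonneg[of "(0, x)"] by (simp add: power2_eq_iff_nonneg)
    finally show ?thesis .
  qed
  have cbnd: "hnorm ip (c x) \<le> C * hnorm ip x" for x
  proof -
    have "hnorm ip (c x) \<le> hnorm (ipK ip) (T (x, 0))" unfolding cd by (rule H.hnK_snd)
    also have "\<dots> \<le> C * hnorm (ipK ip) (x, 0)" by (rule Tbnd)
    also have "hnorm (ipK ip) (x, 0) = hnorm ip x"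
      using hnKp[of x 0] H.hnK_nonneg[of "(x, 0)"] by (simp add: power2_eq_iff_nonneg)
    finally show ?thesis .
  qed
  have dsurj: "surj d"
  proof -
    define R where "R = range d"
    have C1: "C + 1 > 0" using C0 by simp
    have dbnd1: "hnorm ip (d x) \<le> (C + 1) * hnorm ip x" for x
    proof - have "C * hnorm ip x \<le> (C + 1) * hnorm ip x" by (simp add: distrib_right) then show ?thesis using dbnd[of x] by linarith qed
    have Rcl: "closed_sub sc ip R"
      unfolding closed_sub_def
    proof (intro conjI ballI allI impI)
      show "0 \<in> R" using rangeI[of d 0] d0 unfolding R_def by simp
      show "x + y \<in> R" if xy: "x \<in> R" "y \<in> R" for x y
      proof -
        obtain u v where "x = d u" "y = d v" using xy R_def by blast
        then have "x + y = d (u + v)" by (simp add: dadd)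
        then show ?thesis unfolding R_def by blast
      qed
      show "sc t x \<in> R" if xR: "x \<in> R" for t x
      proof -
        obtain u where "x = d u" using xR R_def by blast
        then have "sc t x = d (sc t u)" by (simp add: dhom)
        then show ?thesis unfolding R_def by blast
      qed
      fix s :: "nat \<Rightarrow> 'h" and l
      assume a: "(\<forall>n. s n \<in> R) \<and> (\<forall>e>0. \<exists>N. \<forall>n\<ge>N. hnorm ip (s n - l) < e)"
      define t where "t n = inv d (s n)" for n
      have dt: "d (t n) = s n" for n unfolding t_def using a R_def by (simp add: f_inv_into_f)
      have "\<forall>e>0. \<exists>N::nat. \<forall>m\<ge>N. \<forall>n\<ge>N. hnorm ip (t m - t n) < e"
      proof (intro allI impI)
        fix e :: real assume e: "e > 0"
        then have "e/2 > 0" by simp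
        then obtain N where N: "\<forall>n\<ge>N. hnorm ip (s n - l) < e/2" using a by blast
        have "hnorm ip (t m - t n) < e" if "m \<ge> N" "n \<ge> N" for m n
        proof -
          have "hnorm ip (t m - t n) \<le> hnorm ip (d (t m - t n))" by (rule dlow)
          also have "\<dots> = hnorm ip (s m - s n)" by (simp add: ddiff dt)
          also have "\<dots> \<le> hnorm ip (s m - l) + hnorm ip (l - s n)" by (rule H.tri_diff)
          also have "hnorm ip (l - s n) = hnorm ip (s n - l)" by (rule H.hn_commute)
          finally have "hnorm ip (t m - t n) \<le> hnorm ip (s m - l) + hnorm ip (s n - l)" .
          moreover have "hnorm ip (s m - l) < e/2" "hnorm ip (s n - l) < e/2" using N that by auto
          ultimately show ?thesis by linarith
        qed
        then show "\<exists>N. \<forall>m\<ge>N. \<forall>n\<ge>N. hnorm ip (t m - t n) < e" by blast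
      qed
      from H.complete[OF this] obtain x where x: "\<forall>e>0. \<exists>N. \<forall>n\<ge>N. hnorm ip (t n - x) < e"
        by blast
      have "hnorm ip (d x - l) \<le> 0"
      proof (rule H.le_eps0)
        fix e :: real assume e: "e > 0"
        then have e1: "e / 2 / (C + 1) > 0" and e2: "e / 2 > 0" using C1 by simp_all
        obtain N1 where N1: "\<forall>n\<ge>N1. hnorm ip (t n - x) < e / 2 / (C + 1)" using x e1 by blast
        obtain N2 where N2: "\<forall>n\<ge>N2. hnorm ip (s n - l) < e / 2" using a e2 by blast
        define n where "n = max N1 N2"
        have "hnorm ip (d x - l) \<le> hnorm ip (d x - d (t n)) + hnorm ip (d (t n) - l)" by (rule H.tri_diff)
        also have "hnorm ip (d x - d (t n)) = hnorm ip (d (t n - x))"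
          by (simp add: ddiff H.hn_commute)
        also have "\<dots> \<le> (C + 1) * hnorm ip (t n - x)" by (rule dbnd1)
        also have "\<dots> < (C + 1) * (e / 2 / (C + 1))"
          by (rule mult_strict_left_mono) (use N1 n_def C1 in auto)
        also have "(C + 1) * (e / 2 / (C + 1)) = e / 2" using C1 by (simp add: field_simps)
        also have "hnorm ip (d (t n) - l) < e / 2" using N2 n_def dt by simp
        finally show "hnorm ip (d x - l) < e" by simp
      qed
      then have "d x = l" using H.hn_nonneg[of "d x - l"] H.hn_zero_iff[of "d x - l"] by simp
      then show "l \<in> R" unfolding R_def by blast
    qed
    have "y \<in> R" for y
    proof -
      obtain r where rR: "r \<in> R" and orth: "\<And>u. u \<in> R \<Longrightarrow> ip u (y - r) = 0"
        using H.proj[OF Rcl, of y] by blast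
      define q where "q = y - r"
      have oq: "ip (d x) q = 0" for x using orth[of "d x"] R_def q_def by simp
      define z where "z = inv T (0, q)"
      have Tz: "T z = (0, q)" unfolding z_def by (rule TTi)
      have "snd (B (0, - q)) = 0"
      proof (rule H.ip_unique)
        fix x
        have "ipK ip (T (0, x)) (0, - q) = ipK ip (0, x) (B (0, - q))" by (rule Badj)
        then have "ip x (snd (B (0, - q))) = - ip (d x) q" by (simp add: ipK_def dd)
        then show "ip x (snd (B (0, - q))) = ip x 0" using oq by simp
      qed
      moreover have "z = Jop (B (0, - q))" unfolding z_def Binv by simp
      ultimately have z2: "snd z = 0" by (simp add: Jop_def)
      have "ipK ip (Jop z) z = ipK ip (Jop (T z)) (T z)" by (rule Jiso)
      then have "ip (fst z) (fst z) = - ip q q" using z2 by (simp add: Tz ipK_def Jop_def)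
      then have "Re (ip (fst z) (fst z)) = - Re (ip q q)" by simp
      then have "(hnorm ip (fst z))\<^sup>2 = - (hnorm ip q)\<^sup>2" by (simp add: H.hn_sq)
      then have "hnorm ip q = 0" by (metis add.inverse_neutral neg_0_le_iff_le power2_eq_iff_nonneg zero_le_power2 H.hn_nonneg order_antisym_conv power_zero_numeral)
      then have "q = 0" by (simp add: H.hn_zero_iff)
      then show "y \<in> R" using rR q_def by simp
    qed
    then show ?thesis unfolding R_def by blast
  qed
  have dbij: "bij d" using dinj dsurj by (rule bijI)
  define D where "D = inv d"
  have dD: "d (D y) = y" for y unfolding D_def using dsurj by (simp add: surj_f_inv_f)
  have Dd: "D (d x) = x" for x unfolding D_def using dinj by simp
  have Dadd: "D (x + y) = D x + D y" for x y unfolding D_def by (rule H.inv_add[OF dbij dadd])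
  have Dbnd: "hnorm ip (D y) \<le> hnorm ip y" for y using dlow[of "D y"] by (simp add: dD)
  have aadj0: "ip (a x) u = ip x (fst (B (u, 0)))" for x u
  proof -
    have "ipK ip (T (x, 0)) (u, 0) = ipK ip (x, 0) (B (u, 0))" by (rule Badj)
    then show ?thesis by (simp add: ipK_def ad)
  qed
  define A' where "A' = adj ip a"
  have Aprop: "ip (a x) u = ip x (A' u)" for x u
  proof -
    have ex: "\<exists>B'. \<forall>x y. ip (a x) y = ip x (B' y)" by (rule exI[of _ "\<lambda>u. fst (B (u, 0))"]) (simp add: aadj0)
    have "\<forall>x y. ip (a x) y = ip x (A' y)" unfolding A'_def adj_def by (rule someI_ex[OF ex])
    then show ?thesis by blast
  qed
  have A'eq: "A' u = fst (B (u, 0))" for u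
    by (rule H.ip_unique) (simp add: Aprop[symmetric] aadj0)
  have A'diff: "A' (u - v) = A' u - A' v" for u v by (rule H.adj_diff[OF Aprop])
  have Tinv: "inv T w = Jop (B (Jop w))" for w by (simp add: Binv)
  have A'0: "u = 0" if "A' u = 0" for u
  proof -
    define w where "w = - snd (B (u, 0))"
    have "inv T (u, 0) = (0, w)" using that by (simp add: Tinv A'eq w_def Jop_def)
    then have "T (0, w) = (u, 0)" using TTi[of "(u, 0)"] by simp
    then have "d w = 0" by (simp add: dd)
    then have "w = 0" using dinj d0 by (metis injD)
    then show "u = 0" using \<open>T (0, w) = (u, 0)\<close> T00 by (simp add: zero_prod_def)
  qed
  have A'inj: "inj A'"
  proof (rule injI)
    fix u v assume "A' u = A' v"
    then have "A' (u - v) = 0" by (simp add: A'diff)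
    then have "u - v = 0" by (rule A'0) then show "u = v" by simp
  qed
  have A'key: "A' (a x1 - b (D (c x1))) = x1" for x1
  proof -
    define w where "w = D (c x1)"
    have dw: "d w = c x1" unfolding w_def by (rule dD)
    have "T (x1, - w) = (a x1 - b w, 0)" by (simp add: Tsplit bminus dminus dw)
    then have "B (a x1 - b w, 0) = (x1, w)" using JUB[of "(x1, - w)"] by simp
    then show ?thesis by (simp add: A'eq w_def)
  qed
  have invA': "inv A' x1 = a x1 - b (D (c x1))" for x1
    by (rule inv_f_eq[OF A'inj A'key])
  have Vform: "Vop ip T z = (inv A' (fst z) + b (D (snd z)), - D (c (fst z)) + D (snd z))" for z
    by (simp add: Vop_def A'_def a_def b_def c_def d_def D_def)
  define Phi where "Phi z = (fst z, snd (T z))" for z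
  define Psi where "Psi z = (fst z, D (snd z - c (fst z)))" for z
  have VPhi: "Vop ip T (Phi z) = (fst (T z), snd z)" for z
  proof (cases z)
    case (Pair x1 x2)
    have "D (c x1 + d x2) = D (c x1) + x2" by (simp add: Dadd Dd)
    then show ?thesis by (simp add: Pair Vform Phi_def Tsplit invA' badd)
  qed
  have PhiPsi: "Phi (Psi z) = z" for z
    by (cases z) (simp add: Phi_def Psi_def Tsplit dD)
  have PsiPhi: "Psi (Phi z) = z" for z
    by (cases z) (simp add: Phi_def Psi_def Tsplit Dd)
  have Phibij: "bij Phi" and invPhi: "inv Phi = Psi" using bij_pair[of Psi Phi, OF PsiPhi PhiPsi] by auto
  have hnKfs: "(hnorm (ipK ip) z)\<^sup>2 = (hnorm ip (fst z))\<^sup>2 + (hnorm ip (snd z))\<^sup>2" for z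
    by (rule H.hnK_sq)
  have q1V: "(hnorm (ipK ip) (Phi z))\<^sup>2 + (hnorm (ipK ip) (Vop ip T (Phi z)))\<^sup>2
      = (hnorm (ipK ip) z)\<^sup>2 + (hnorm (ipK ip) (T z))\<^sup>2" for z
    unfolding VPhi hnKfs by (simp add: Phi_def)
  have q2V: "(hnorm (ipK ip) (Vop ip T (Phi z) - Phi z))\<^sup>2 = (hnorm (ipK ip) (T z - z))\<^sup>2" for z
    unfolding VPhi hnKfs by (simp add: Phi_def H.hn_commute[of "snd z"])
  have Phiadd: "Phi (x + y) = Phi x + Phi y" for x y by (simp add: Phi_def Tadd)
  have Phihom: "Phi (scK sc t x) = scK sc t (Phi x)" for t x using Thom[of t x] by (simp add: Phi_def scK_def)
  have Phibnd: "hnorm (ipK ip) (Phi x) \<le> (1 + C) * hnorm (ipK ip) x" for x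
  proof -
    have "hnorm (ipK ip) (Phi x) \<le> hnorm ip (fst x) + hnorm ip (snd (T x))"
      using H.hnK_le[of "Phi x"] by (simp add: Phi_def)
    also have "\<dots> \<le> hnorm (ipK ip) x + hnorm (ipK ip) (T x)"
      using H.hnK_fst[of x] H.hnK_snd[of "T x"] by linarith
    also have "\<dots> \<le> hnorm (ipK ip) x + C * hnorm (ipK ip) x" using Tbnd[of x] by linarith
    finally show ?thesis by (simp add: algebra_simps)
  qed
  have Psibnd: "hnorm (ipK ip) (inv Phi x) \<le> (2 + C) * hnorm (ipK ip) x" for x
  proof -
    have s1: "hnorm (ipK ip) (inv Phi x) \<le> hnorm ip (fst x) + hnorm ip (D (snd x - c (fst x)))"
      using H.hnK_le[of "Psi x"] by (simp add: Psi_def invPhi)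
    have s2: "hnorm ip (D (snd x - c (fst x))) \<le> hnorm ip (snd x - c (fst x))" by (rule Dbnd)
    have s3: "hnorm ip (snd x - c (fst x)) \<le> hnorm ip (snd x) + hnorm ip (c (fst x))"
      using H.tri[of "snd x" "- c (fst x)"] by (simp add: H.hn_minus)
    have s4: "hnorm ip (c (fst x)) \<le> C * hnorm ip (fst x)" by (rule cbnd)
    have s5: "hnorm ip (fst x) \<le> hnorm (ipK ip) x" by (rule H.hnK_fst)
    have s6: "hnorm ip (snd x) \<le> hnorm (ipK ip) x" by (rule H.hnK_snd)
    have s7: "C * hnorm ip (fst x) \<le> C * hnorm (ipK ip) x" by (rule mult_left_mono[OF s5 C0])
    have "(2 + C) * hnorm (ipK ip) x = 2 * hnorm (ipK ip) x + C * hnorm (ipK ip) x"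
      by (simp add: algebra_simps)
    then show ?thesis using s1 s2 s3 s4 s5 s6 s7 by linarith
  qed
  have gV: "gval (ipK ip) (Vop ip T) = gval (ipK ip) T"
    by (rule gval_transfer[OF bij_is_surj[OF Phibij] q1V q2V])
  have eV: "gess (scK sc) (ipK ip) (Vop ip T) = gess (scK sc) (ipK ip) T"
    by (rule K.gess_transfer[OF Phibij Phiadd Phihom Phibnd Psibnd q1V q2V])
  have q1T: "(hnorm (ipK ip) (T z))\<^sup>2 + (hnorm (ipK ip) (inv T (T z)))\<^sup>2
      = (hnorm (ipK ip) z)\<^sup>2 + (hnorm (ipK ip) (T z))\<^sup>2" for z by (simp add: TiT)
  have q2T: "(hnorm (ipK ip) (inv T (T z) - T z))\<^sup>2 = (hnorm (ipK ip) (T z - z))\<^sup>2" for z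
    by (simp add: TiT K.hn_commute)
  have gT: "gval (ipK ip) (inv T) = gval (ipK ip) T"
    by (rule gval_transfer[OF bij_is_surj[OF Tbij] q1T q2T])
  have eT: "gess (scK sc) (ipK ip) (inv T) = gess (scK sc) (ipK ip) T"
    by (rule K.gess_transfer[OF Tbij Tadd Thom Tbnd Tibnd q1T q2T])
  have hnJ: "hnorm (ipK ip) (Jop z) = hnorm (ipK ip) z" for z
    by (simp add: hnorm_def ipK_def Jop_def)
  have BJ: "B (Jop z) = Jop (inv T z)" for z by (simp add: Binv)
  have Jdiff: "Jop x - Jop y = Jop (x - y)" for x y by (simp add: Jop_def)
  have q1J: "(hnorm (ipK ip) (Jop z))\<^sup>2 + (hnorm (ipK ip) (B (Jop z)))\<^sup>2
      = (hnorm (ipK ip) z)\<^sup>2 + (hnorm (ipK ip) (inv T z))\<^sup>2" for z by (simp add: BJ hnJ)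
  have q2J: "(hnorm (ipK ip) (B (Jop z) - Jop z))\<^sup>2 = (hnorm (ipK ip) (inv T z - z))\<^sup>2" for z
    by (simp add: BJ Jdiff hnJ)
  have Jbij: "bij Jop" and invJ: "inv Jop = Jop" using bij_pair[of Jop Jop] by auto
  have Jadd: "Jop (x + y) = Jop x + Jop y" for x y by (simp add: Jop_def)
  have Jhom: "Jop (scK sc t x) = scK sc t (Jop x)" for t x by (simp add: Jop_def scK_def H.sc_minus_r)
  have Jbnd: "hnorm (ipK ip) (Jop x) \<le> 1 * hnorm (ipK ip) x" for x by (simp add: hnJ)
  have Jibnd: "hnorm (ipK ip) (inv Jop x) \<le> 1 * hnorm (ipK ip) x" for x by (simp add: hnJ invJ)
  have gB: "gval (ipK ip) B = gval (ipK ip) (inv T)"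
    by (rule gval_transfer[OF bij_is_surj[OF Jbij] q1J q2J])
  have eB: "gess (scK sc) (ipK ip) B = gess (scK sc) (ipK ip) (inv T)"
    by (rule K.gess_transfer[OF Jbij Jadd Jhom Jbnd Jibnd q1J q2J])
  show ?thesis using gV eV gT eT gB eB unfolding B_def by simp
qed

end
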